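(* Let $I$ be a nonempty open real interval, let $\varphi:I\to\mathbb{R}$ be a strictly monotone function, let $f:I\to\mathbb{R}$ be an arbitrary function, and let $t\in\,]0,1[\,$. Assume that \[ \big(tf(x)+(1-t)f(y)\big)\varphi(tx+(1-t)y)=tf(x)\varphi(x)+(1-t)f(y)\varphi(y) \qquad\text{for all } x,y\in I. \] Then either $f$ is identically zero on $I$, or $f$ is nowhere zero on $I$, $f$ and $\varphi$ are infinitely many times differentiable on $I$, and there exists a nonzero constant $\gamma\in\mathbb{R}$ such that $f^2\varphi'=\gamma$ on $I$. *)

theory Defs
  imports "HOL-Analysis.Analysis"
begin

definition C_infinity_on :: "real set \<Rightarrow> (real \<Rightarrow> real) \<Rightarrow> bool" where
  "C_infinity_on I f \<longleftrightarrow> (\<forall>n. \<forall>x\<in>I. ((deriv ^^ n) f) differentiable (at x))"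

end

theory Submission
  imports Defs
begin



fun Ck :: "real set \<Rightarrow> nat \<Rightarrow> (real \<Rightarrow> real) \<Rightarrow> bool" where
  "Ck S 0 g = continuous_on S g"
| "Ck S (Suc k) g = ((\<forall>x\<in>S. g differentiable (at x)) \<and> Ck S k (deriv g))"

lemma deriv_cong_open:
  fixes g h :: "real \<Rightarrow> real"
  assumes "open S" "x \<in> S" "\<And>y. y \<in> S \<Longrightarrow> g y = h y" "g differentiable (at x)"
  shows "h differentiable (at x)" "deriv h x = deriv g x"
proof -
  have d: "(g has_real_derivative deriv g x) (at x)"
    using assms(4) DERIV_deriv_iff_real_differentiable by blast
  have "(h has_real_derivative deriv g x) (at x)"
    by (rule has_field_derivative_transform_within_open[OF d assms(1,2)]) (use assms(3) in auto)
  then show "h differentiable (at x)" "deriv h x = deriv g x"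
    using DERIV_imp_deriv real_differentiable_def by blast+
qed

lemma Ck_cong:
  assumes "open S" "Ck S k g" "\<And>y. y \<in> S \<Longrightarrow> g y = h y"
  shows "Ck S k h"
  using assms(2,3)
proof (induction k arbitrary: g h)
  case 0
  then show ?case using continuous_on_cong by fastforce
next
  case (Suc k)
  have "\<forall>x\<in>S. h differentiable (at x)" and e: "\<And>x. x\<in>S \<Longrightarrow> deriv g x = deriv h x"
    using deriv_cong_open[OF assms(1), of _ g h] Suc.prems by auto
  moreover have "Ck S k (deriv h)"
    using Suc.IH[of "deriv g" "deriv h"] Suc.prems e by auto
  ultimately show ?case by simp
qed

lemma Ck_Suc_imp:
  assumes "Ck S (Suc k) g" shows "Ck S k g"
  using assms
proof (induction k arbitrary: g)
  case 0
  then show ?case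
    by (auto intro!: continuous_at_imp_continuous_on differentiable_imp_continuous_within)
next
  case (Suc k)
  then show ?case by simp
qed

lemma Ck_le:
  assumes "Ck S k g" "j \<le> k" shows "Ck S j g"
  using assms
proof (induction k)
  case 0 then show ?case by simp
next
  case (Suc k)
  then show ?case using Ck_Suc_imp le_Suc_eq by blast
qed

lemma Ck_subset:
  assumes "Ck S k g" "T \<subseteq> S" shows "Ck T k g"
  using assms
proof (induction k arbitrary: g)
  case 0 then show ?case using continuous_on_subset by auto
next
  case (Suc k) then show ?case by auto
qed

lemma Ck_const: "open S \<Longrightarrow> Ck S k (\<lambda>x. c)"
proof (induction k arbitrary: c)
  case 0 then show ?case by simp
next
  case (Suc k)
  have "Ck S k (deriv (\<lambda>x. c))"
    using Suc.IH[OF Suc.prems, of 0] by simp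
  then show ?case by simp
qed

lemma Ck_id: "open S \<Longrightarrow> Ck S k (\<lambda>x. x)"
proof (induction k)
  case 0 then show ?case by (simp add: continuous_on_id)
next
  case (Suc k)
  have "deriv (\<lambda>x. x) = (\<lambda>x. 1::real)" by (rule ext) simp
  then show ?case using Ck_const[OF Suc.prems] by simp
qed

lemma Ck_add:
  assumes "open S" "Ck S k g" "Ck S k h" shows "Ck S k (\<lambda>x. g x + h x)"
  using assms(2,3)
proof (induction k arbitrary: g h)
  case 0 then show ?case by (simp add: continuous_on_add)
next
  case (Suc k)
  have "Ck S k (\<lambda>x. deriv g x + deriv h x)" using Suc by simp
  moreover have "\<And>x. x\<in>S \<Longrightarrow> deriv g x + deriv h x = deriv (\<lambda>x. g x + h x) x"
    using Suc.prems by (simp add: deriv_add real_differentiable_def field_differentiable_def)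
  ultimately have "Ck S k (deriv (\<lambda>x. g x + h x))" using Ck_cong[OF assms(1)] by blast
  then show ?case using Suc.prems by auto
qed

lemma Ck_mult:
  assumes "open S" "Ck S k g" "Ck S k h" shows "Ck S k (\<lambda>x. g x * h x)"
  using assms(2,3)
proof (induction k arbitrary: g h)
  case 0 then show ?case by (simp add: continuous_on_mult)
next
  case (Suc k)
  have "Ck S k (\<lambda>x. deriv g x * h x + g x * deriv h x)"
    using Suc Ck_Suc_imp Ck_add[OF assms(1)] by simp
  moreover have "\<And>x. x\<in>S \<Longrightarrow> deriv g x * h x + g x * deriv h x = deriv (\<lambda>x. g x * h x) x"
    using Suc.prems by (simp add: deriv_mult real_differentiable_def field_differentiable_def)
  ultimately have "Ck S k (deriv (\<lambda>x. g x * h x))" using Ck_cong[OF assms(1)] by blast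
  then show ?case using Suc.prems by auto
qed





lemma Ck_cmult:
  assumes "open S" "Ck S k g" shows "Ck S k (\<lambda>x. c * g x)"
  using Ck_mult[OF assms(1) Ck_const[OF assms(1)] assms(2)] by simp

lemma Ck_inverse:
  assumes "open S" "Ck S k g" "\<And>x. x \<in> S \<Longrightarrow> g x \<noteq> 0" shows "Ck S k (\<lambda>x. inverse (g x))"
  using assms(2)
proof (induction k)
  case 0 then show ?case using assms(3) continuous_on_inverse[of S g] by simp
next
  case (Suc k)
  have ik: "Ck S k (\<lambda>x. inverse (g x))" using Suc Ck_Suc_imp by blast
  have a: "Ck S k (\<lambda>x. - deriv g x)"
    using Ck_cmult[OF assms(1), of k "deriv g" "-1"] Suc.prems by simp
  have "Ck S k (\<lambda>x. - deriv g x * (inverse (g x) * inverse (g x)))"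
    by (rule Ck_mult[OF assms(1) a Ck_mult[OF assms(1) ik ik]])
  moreover have "\<And>x. x\<in>S \<Longrightarrow> - deriv g x * (inverse (g x) * inverse (g x)) = deriv (\<lambda>x. inverse (g x)) x"
  proof -
    fix x assume x: "x \<in> S"
    have "(g has_real_derivative deriv g x) (at x)"
      using Suc.prems x DERIV_deriv_iff_real_differentiable by auto
    then have "((\<lambda>x. inverse (g x)) has_real_derivative - (inverse (g x) * deriv g x * inverse (g x))) (at x)"
      using DERIV_inverse_fun[of g "deriv g x" x UNIV] assms(3)[OF x] by (simp add: DERIV_inverse')
    then show "- deriv g x * (inverse (g x) * inverse (g x)) = deriv (\<lambda>x. inverse (g x)) x"
      by (auto dest!: DERIV_imp_deriv simp: algebra_simps)
  qed
  ultimately have "Ck S k (deriv (\<lambda>x. inverse (g x)))" using Ck_cong[OF assms(1)] by blast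
  moreover have "\<forall>x\<in>S. (\<lambda>x. inverse (g x)) differentiable (at x)"
  proof
    fix x assume x: "x \<in> S"
    have "(g has_real_derivative deriv g x) (at x)"
      using Suc.prems x DERIV_deriv_iff_real_differentiable by auto
    then show "(\<lambda>x. inverse (g x)) differentiable (at x)"
      using DERIV_inverse'[of g "deriv g x" x UNIV] assms(3)[OF x] real_differentiable_def by blast
  qed
  ultimately show ?case by simp
qed

lemma Ck_divide:
  assumes "open S" "Ck S k g" "Ck S k h" "\<And>x. x \<in> S \<Longrightarrow> h x \<noteq> 0" shows "Ck S k (\<lambda>x. g x / h x)"
  using Ck_mult[OF assms(1,2) Ck_inverse[OF assms(1,3,4)]] by (simp add: divide_inverse)

lemma Ck_diff:
  assumes "open S" "Ck S k g" "Ck S k h" shows "Ck S k (\<lambda>x. g x - h x)"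
  using Ck_add[OF assms(1,2) Ck_mult[OF assms(1) Ck_const[OF assms(1), of k "-1"] assms(3)]] by simp




lemma Ck_affine:
  assumes "open T" "Ck S k g" "\<And>x. x \<in> T \<Longrightarrow> a * x + b \<in> S"
  shows "Ck T k (\<lambda>x. g (a * x + b))"
  using assms(2)
proof (induction k arbitrary: g)
  case 0
  have "continuous_on T (\<lambda>x. a * x + b)" by (intro continuous_intros)
  moreover have "(\<lambda>x. a * x + b) ` T \<subseteq> S" using assms(3) by auto
  ultimately show ?case using continuous_on_compose2[of S g T "\<lambda>x. a * x + b"] 0 by simp
next
  case (Suc k)
  have D: "((\<lambda>x. g (a * x + b)) has_real_derivative deriv g (a * x + b) * a) (at x)" if x: "x \<in> T" for x
  proof -
    have "(g has_real_derivative deriv g (a * x + b)) (at (a * x + b))"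
      using Suc.prems assms(3)[OF x] DERIV_deriv_iff_real_differentiable by auto
    moreover have "((\<lambda>x. a * x + b) has_real_derivative a) (at x)"
      by (auto intro!: derivative_eq_intros)
    ultimately show ?thesis using DERIV_chain2[of g "deriv g (a * x + b)" "\<lambda>x. a * x + b" x a UNIV] by simp
  qed
  have "Ck T k (\<lambda>x. a * deriv g (a * x + b))"
    using Suc.IH[of "deriv g"] Suc.prems Ck_cmult[OF assms(1)] by simp
  moreover have "a * deriv g (a * x + b) = deriv (\<lambda>x. g (a * x + b)) x" if "x\<in>T" for x
    using DERIV_imp_deriv[OF D[OF that]] by (simp add: mult.commute)
  ultimately have "Ck T k (deriv (\<lambda>x. g (a * x + b)))" using Ck_cong[OF assms(1)] by blast
  moreover have "\<forall>x\<in>T. (\<lambda>x. g (a * x + b)) differentiable (at x)"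
    using D real_differentiable_def by blast
  ultimately show ?case by simp
qed




lemma Ck_local:
  assumes "open S" "\<And>x. x \<in> S \<Longrightarrow> \<exists>V. open V \<and> x \<in> V \<and> V \<subseteq> S \<and> Ck V k g"
  shows "Ck S k g"
  using assms(2)
proof (induction k arbitrary: g)
  case 0
  have "isCont g x" if x: "x \<in> S" for x
  proof -
    obtain V where V: "open V" "x \<in> V" "V \<subseteq> S" "continuous_on V g" using 0[OF x] by auto
    then show ?thesis using continuous_on_eq_continuous_at by blast
  qed
  then show ?case by (simp add: continuous_at_imp_continuous_on)
next
  case (Suc k)
  have "g differentiable (at x)" if x: "x \<in> S" for x
  proof -
    obtain V where V: "open V" "x \<in> V" "V \<subseteq> S" "Ck V (Suc k) g" using Suc.prems[OF x] by auto
    then show ?thesis by simp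
  qed
  moreover have "Ck S k (deriv g)"
  proof (rule Suc.IH)
    fix x assume x: "x \<in> S"
    obtain V where V: "open V" "x \<in> V" "V \<subseteq> S" "Ck V (Suc k) g" using Suc.prems[OF x] by auto
    then show "\<exists>V. open V \<and> x \<in> V \<and> V \<subseteq> S \<and> Ck V k (deriv g)" by auto
  qed
  ultimately show ?case by simp
qed

lemma Ck_deriv_iter:
  assumes "Ck S (n + k) g" shows "Ck S k ((deriv ^^ n) g)"
  using assms
proof (induction n arbitrary: g)
  case 0 then show ?case by simp
next
  case (Suc n)
  have "(deriv ^^ Suc n) g = (deriv ^^ n) (deriv g)" by (simp add: funpow_Suc_right del: funpow.simps)
  then show ?case using Suc by simp
qed

lemma Ck_C_infinity:
  assumes "\<And>k. Ck S k g" shows "C_infinity_on S g"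
  unfolding C_infinity_on_def
proof (intro allI ballI)
  fix n x assume "x \<in> S"
  have "Ck S (Suc 0) ((deriv ^^ n) g)" by (rule Ck_deriv_iter) (rule assms)
  then show "(deriv ^^ n) g differentiable at x" using \<open>x \<in> S\<close> by (simp only: Ck.simps)
qed

lemma Ck_primitive:
  assumes "a < b" "continuous_on {a..b} g" "Ck {a<..<b} k g"
  shows "Ck {a<..<b} (Suc k) (\<lambda>x. integral {a..x} g)"
    and "\<And>x. x \<in> {a<..<b} \<Longrightarrow> ((\<lambda>x. integral {a..x} g) has_real_derivative g x) (at x)"
proof -
  show D: "((\<lambda>x. integral {a..x} g) has_real_derivative g x) (at x)" if "x \<in> {a<..<b}" for x
  proof -
    have "((\<lambda>x. integral {a..x} g) has_real_derivative g x) (at x within {a..b})"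
      using integral_has_real_derivative[OF assms(2)] that by auto
    then show ?thesis
      using that at_within_interior[of x "{a..b}"] by auto
  qed
  have "Ck {a<..<b} k (deriv (\<lambda>x. integral {a..x} g))"
    using Ck_cong[OF _ assms(3)] D DERIV_imp_deriv by (metis open_greaterThanLessThan)
  moreover have "\<forall>x\<in>{a<..<b}. (\<lambda>x. integral {a..x} g) differentiable (at x)"
  proof
    fix x assume "x \<in> {a<..<b}"
    then show "(\<lambda>x. integral {a..x} g) differentiable (at x)"
      unfolding real_differentiable_def using D by blast
  qed
  ultimately show "Ck {a<..<b} (Suc k) (\<lambda>x. integral {a..x} g)"
    by (simp only: Ck.simps)
qed




lemma lin_filterlim_left:
  fixes p b c :: real assumes "c > 0"
  shows "filterlim (\<lambda>y. b + c * y) (at_left (b + c * p)) (at_left p)"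
proof (rule tendsto_imp_filterlim_at_left)
  show "((\<lambda>y. b + c * y) \<longlongrightarrow> b + c * p) (at_left p)" by (intro tendsto_intros)
  show "\<forall>\<^sub>F y in at_left p. b + c * y < b + c * p"
    using assms by (auto simp: eventually_at_filter)
qed

lemma lin_filterlim_right:
  fixes p b c :: real assumes "c > 0"
  shows "filterlim (\<lambda>y. b + c * y) (at_right (b + c * p)) (at_right p)"
proof (rule tendsto_imp_filterlim_at_right)
  show "((\<lambda>y. b + c * y) \<longlongrightarrow> b + c * p) (at_right p)" by (intro tendsto_intros)
  show "\<forall>\<^sub>F y in at_right p. b + c * y > b + c * p"
    using assms by (auto simp: eventually_at_filter)
qed

locale M =
  fixes I :: "real set" and \<phi> F :: "real \<Rightarrow> real" and t :: real
  assumes I: "open I" "is_interval I" "I \<noteq> {}"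
    and mono: "strict_mono_on I \<phi>"
    and t: "0 < t" "t < 1"
    and pos: "\<And>x. x \<in> I \<Longrightarrow> F x > 0"
    and eq: "\<And>x y. x \<in> I \<Longrightarrow> y \<in> I \<Longrightarrow>
      (t * F x + (1 - t) * F y) * \<phi> (t * x + (1 - t) * y)
        = t * F x * \<phi> x + (1 - t) * F y * \<phi> y"
begin

lemma conv: "x \<in> I \<Longrightarrow> y \<in> I \<Longrightarrow> t * x + (1 - t) * y \<in> I"
  using is_interval_convex[OF I(2)] t convexD[of I x y t "1-t"] by auto

lemma between: "a \<in> I \<Longrightarrow> b \<in> I \<Longrightarrow> a \<le> z \<Longrightarrow> z \<le> b \<Longrightarrow> z \<in> I"
  using I(2) unfolding is_interval_1 by blast

lemma lt: "x \<in> I \<Longrightarrow> y \<in> I \<Longrightarrow> x < y \<Longrightarrow> \<phi> x < \<phi> y"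
  using mono by (simp add: strict_mono_on_def)

lemma le: "x \<in> I \<Longrightarrow> y \<in> I \<Longrightarrow> x \<le> y \<Longrightarrow> \<phi> x \<le> \<phi> y"
  using lt by (cases "x = y") (auto intro: less_imp_le)

lemma eq2: "x \<in> I \<Longrightarrow> y \<in> I \<Longrightarrow>
   t * F x * (\<phi> (t * x + (1 - t) * y) - \<phi> x) = (1 - t) * F y * (\<phi> y - \<phi> (t * x + (1 - t) * y))"
  using eq[of x y] by (simp add: algebra_simps)

lemma ball_in: "p \<in> I \<Longrightarrow> \<exists>e>0. {p - e..p + e} \<subseteq> I"
proof -
  assume p: "p \<in> I"
  obtain e where e: "e > 0" "ball p e \<subseteq> I" using I(1) p open_contains_ball by blast
  have "{p - e/2..p + e/2} \<subseteq> ball p e" using e(1) by (auto simp: dist_real_def)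
  then show ?thesis using e by (intro exI[of _ "e/2"]) auto
qed

definition "phiL p = Lim (at_left p) \<phi>"
definition "phiR p = Lim (at_right p) \<phi>"

lemma phiL: assumes p: "p \<in> I" shows "(\<phi> \<longlongrightarrow> phiL p) (at_left p)"
proof -
  have "(\<phi> \<longlongrightarrow> Sup (\<phi> ` ({..<p} \<inter> I))) (at p within ({..<p} \<inter> I))"
    by (rule Lim_left_bound[where K = "\<phi> p"]) (simp_all add: le p less_imp_le)
  moreover have "at p within ({..<p} \<inter> I) = at_left p"
    by (rule at_within_nhd[of p I]) (use p I in auto)
  ultimately have "(\<phi> \<longlongrightarrow> Sup (\<phi> ` ({..<p} \<inter> I))) (at_left p)" by simp
  moreover then have "Lim (at_left p) \<phi> = Sup (\<phi> ` ({..<p} \<inter> I))" by (intro tendsto_Lim) auto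
  ultimately show ?thesis unfolding phiL_def by simp
qed

lemma phiR: assumes p: "p \<in> I" shows "(\<phi> \<longlongrightarrow> phiR p) (at_right p)"
proof -
  have "(\<phi> \<longlongrightarrow> Inf (\<phi> ` ({p<..} \<inter> I))) (at p within ({p<..} \<inter> I))"
    by (rule Lim_right_bound[where K = "\<phi> p"]) (simp_all add: le p less_imp_le)
  moreover have "at p within ({p<..} \<inter> I) = at_right p"
    by (rule at_within_nhd[of p I]) (use p I in auto)
  ultimately have "(\<phi> \<longlongrightarrow> Inf (\<phi> ` ({p<..} \<inter> I))) (at_right p)" by simp
  moreover then have "Lim (at_right p) \<phi> = Inf (\<phi> ` ({p<..} \<inter> I))" by (intro tendsto_Lim) auto
  ultimately show ?thesis unfolding phiR_def by simp
qed

lemma phiL_ge: assumes "p \<in> I" "z \<in> I" "z < p" shows "\<phi> z \<le> phiL p"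
proof (rule tendsto_lowerbound[OF phiL[OF assms(1)]])
  show "\<forall>\<^sub>F y in at_left p. \<phi> z \<le> \<phi> y"
    using eventually_at_left_real[OF assms(3)]
  proof eventually_elim
    case (elim y) then have "y \<in> I" using between[OF assms(2,1)] by auto
    then show ?case using le assms elim by simp
  qed
qed simp

lemma phiL_le: assumes "p \<in> I" shows "phiL p \<le> \<phi> p"
proof (rule tendsto_upperbound[OF phiL[OF assms(1)]])
  obtain e where e: "e > 0" "{p - e..p + e} \<subseteq> I" using ball_in assms by blast
  show "\<forall>\<^sub>F y in at_left p. \<phi> y \<le> \<phi> p"
  proof -
    have "p - e < p" using e by simp
    from eventually_at_left_real[OF this] show ?thesis
    proof eventually_elim
      case (elim y) then have "y \<in> I" using e by auto
      then show ?case using le assms elim by simp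
    qed
  qed
qed simp

lemma phiR_le: assumes "p \<in> I" "z \<in> I" "p < z" shows "phiR p \<le> \<phi> z"
proof (rule tendsto_upperbound[OF phiR[OF assms(1)]])
  show "\<forall>\<^sub>F y in at_right p. \<phi> y \<le> \<phi> z"
    using eventually_at_right_real[OF assms(3)]
  proof eventually_elim
    case (elim y) then have "y \<in> I" using between[OF assms(1,2)] by auto
    then show ?case using le assms elim by simp
  qed
qed simp

lemma phiR_ge: assumes "p \<in> I" shows "\<phi> p \<le> phiR p"
proof (rule tendsto_lowerbound[OF phiR[OF assms(1)]])
  obtain e where e: "e > 0" "{p - e..p + e} \<subseteq> I" using ball_in assms by blast
  show "\<forall>\<^sub>F y in at_right p. \<phi> p \<le> \<phi> y"
  proof -
    have "p < p + e" using e by simp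
    from eventually_at_right_real[OF this] show ?thesis
    proof eventually_elim
      case (elim y) then have "y \<in> I" using e by auto
      then show ?case using le assms elim by simp
    qed
  qed
qed simp

end



context M begin

definition "K x1 y = t * F x1 * (\<phi> (t*x1 + (1-t)*y) - \<phi> x1) / ((1-t) * (\<phi> y - \<phi> (t*x1 + (1-t)*y)))"

lemma mid_lt: "x < y \<Longrightarrow> x < t*x + (1-t)*y \<and> t*x + (1-t)*y < y"
proof -
  assume "x < y"
  then have "t*x + (1-t)*y - x = (1-t)*(y-x)" "y - (t*x + (1-t)*y) = t*(y-x)" by algebra+
  then show ?thesis using t \<open>x<y\<close> by (metis diff_gt_0_iff_gt diff_gt_0_iff_gt mult_pos_pos)
qed

lemma mid_gt: "y < x \<Longrightarrow> y < t*x + (1-t)*y \<and> t*x + (1-t)*y < x"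
proof -
  assume "y < x"
  then have "t*x + (1-t)*y - y = t*(x-y)" "x - (t*x + (1-t)*y) = (1-t)*(x-y)" by algebra+
  then show ?thesis using t \<open>y<x\<close> by (metis diff_gt_0_iff_gt diff_gt_0_iff_gt mult_pos_pos)
qed

lemma FK: assumes "x1 \<in> I" "y \<in> I" "x1 \<noteq> y" shows "F y = K x1 y"
proof -
  let ?m = "t*x1 + (1-t)*y"
  have mI: "?m \<in> I" using conv assms by simp
  have "\<phi> y - \<phi> ?m \<noteq> 0"
  proof (cases "x1 < y")
    case True then show ?thesis using mid_lt[OF True] lt[OF mI assms(2)] by simp
  next
    case False then have "y < x1" using assms(3) by simp
    then show ?thesis using mid_gt[OF \<open>y<x1\<close>] lt[OF assms(2) mI] by simp
  qed
  moreover have "1 - t \<noteq> 0" using t by simp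
  ultimately have nz: "(1-t) * (\<phi> y - \<phi> ?m) \<noteq> 0" by simp
  have h: "t * F x1 * (\<phi> ?m - \<phi> x1) = (1-t) * F y * (\<phi> y - \<phi> ?m)" by (rule eq2[OF assms(1,2)])
  then have "F y * ((1-t) * (\<phi> y - \<phi> ?m)) = t * F x1 * (\<phi> ?m - \<phi> x1)" by (simp add: mult_ac)
  then show ?thesis unfolding K_def using nz by (simp add: eq_divide_eq)
qed

lemma FL: assumes p: "p \<in> I" shows "\<exists>l>0. (F \<longlongrightarrow> l) (at_left p)"
proof -
  obtain e where e: "e > 0" "{p - e..p + e} \<subseteq> I" using ball_in p by blast
  define x1 where "x1 = p - e"
  have x1: "x1 \<in> I" "x1 < p" using e unfolding x1_def by auto
  define q where "q = t*x1 + (1-t)*p"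
  have q: "x1 < q" "q < p" using mid_lt[OF x1(2)] unfolding q_def by auto
  have qI: "q \<in> I" using conv[OF x1(1) p] unfolding q_def .
  have s: "1 - t > 0" using t by simp
  have lim1: "((\<lambda>y. \<phi> (t*x1 + (1-t)*y)) \<longlongrightarrow> phiL q) (at_left p)"
    using filterlim_compose[OF phiL[OF qI] lin_filterlim_left[OF s, of "t*x1" p, folded q_def]] .
  have lim: "((\<lambda>y. K x1 y) \<longlongrightarrow> t * F x1 * (phiL q - \<phi> x1) / ((1-t) * (phiL p - phiL q))) (at_left p)"
    unfolding K_def
  proof (intro tendsto_intros lim1 phiL[OF p])
    have "phiL q \<le> \<phi> q" using phiL_le[OF qI] .
    also have "\<phi> q < \<phi> ((q+p)/2)" using lt[OF qI _ ] between[OF qI p, of "(q+p)/2"] q by auto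
    also have "\<phi> ((q+p)/2) \<le> phiL p" using phiL_ge[OF p] between[OF qI p, of "(q+p)/2"] q by auto
    finally show "(1-t) * (phiL p - phiL q) \<noteq> 0" using s by simp
  qed
  have "\<phi> x1 < \<phi> ((x1+q)/2)" using lt[OF x1(1)] between[OF x1(1) qI, of "(x1+q)/2"] q by auto
  also have "\<phi> ((x1+q)/2) \<le> phiL q" using phiL_ge[OF qI] between[OF x1(1) qI, of "(x1+q)/2"] q by auto
  finally have n: "phiL q - \<phi> x1 > 0" by simp
  have d: "phiL p - phiL q > 0"
  proof -
    have "phiL q \<le> \<phi> q" using phiL_le[OF qI] .
    also have "\<phi> q < \<phi> ((q+p)/2)" using lt[OF qI _ ] between[OF qI p, of "(q+p)/2"] q by auto
    also have "\<phi> ((q+p)/2) \<le> phiL p" using phiL_ge[OF p] between[OF qI p, of "(q+p)/2"] q by auto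
    finally show ?thesis by simp
  qed
  have lpos: "t * F x1 * (phiL q - \<phi> x1) / ((1-t) * (phiL p - phiL q)) > 0"
    using t pos[OF x1(1)] n d s by (intro divide_pos_pos mult_pos_pos) auto
  have "\<forall>\<^sub>F y in at_left p. K x1 y = F y"
    using eventually_at_left_real[OF x1(2)]
  proof eventually_elim
    case (elim y) then have "y \<in> I" using between[OF x1(1) p] by auto
    then show ?case using FK[OF x1(1)] elim by auto
  qed
  then show ?thesis using Lim_transform_eventually[OF lim] lpos by blast
qed

lemma FR: assumes p: "p \<in> I" shows "\<exists>l>0. (F \<longlongrightarrow> l) (at_right p)"
proof -
  obtain e where e: "e > 0" "{p - e..p + e} \<subseteq> I" using ball_in p by blast
  define x1 where "x1 = p + e"
  have x1: "x1 \<in> I" "p < x1" using e unfolding x1_def by auto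
  define q where "q = t*x1 + (1-t)*p"
  have q: "p < q" "q < x1" using mid_gt[OF x1(2)] unfolding q_def by auto
  have qI: "q \<in> I" using conv[OF x1(1) p] unfolding q_def .
  have s: "1 - t > 0" using t by simp
  have lim1: "((\<lambda>y. \<phi> (t*x1 + (1-t)*y)) \<longlongrightarrow> phiR q) (at_right p)"
    using filterlim_compose[OF phiR[OF qI] lin_filterlim_right[OF s, of "t*x1" p, folded q_def]] .
  have d: "phiR p - phiR q < 0"
  proof -
    have "phiR p \<le> \<phi> ((p+q)/2)" using phiR_le[OF p] between[OF p qI, of "(p+q)/2"] q by auto
    also have "\<phi> ((p+q)/2) < \<phi> q" using lt[OF _ qI] between[OF p qI, of "(p+q)/2"] q by auto
    also have "\<phi> q \<le> phiR q" using phiR_ge[OF qI] .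
    finally show ?thesis by simp
  qed
  have lim: "((\<lambda>y. K x1 y) \<longlongrightarrow> t * F x1 * (phiR q - \<phi> x1) / ((1-t) * (phiR p - phiR q))) (at_right p)"
    unfolding K_def
  proof (intro tendsto_intros lim1 phiR[OF p])
    show "(1-t) * (phiR p - phiR q) \<noteq> 0" using s d by simp
  qed
  have "phiR q \<le> \<phi> ((q+x1)/2)" using phiR_le[OF qI] between[OF qI x1(1), of "(q+x1)/2"] q by auto
  also have "\<phi> ((q+x1)/2) < \<phi> x1" using lt[OF _ x1(1)] between[OF qI x1(1), of "(q+x1)/2"] q by auto
  finally have n: "phiR q - \<phi> x1 < 0" by simp
  have "t * F x1 * (phiR q - \<phi> x1) < 0"
    using t pos[OF x1(1)] n by (simp add: mult_pos_neg)
  moreover have "(1-t) * (phiR p - phiR q) < 0" using s d by (simp add: mult_pos_neg)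
  ultimately have lpos: "t * F x1 * (phiR q - \<phi> x1) / ((1-t) * (phiR p - phiR q)) > 0"
    by (simp add: divide_neg_neg)
  have "\<forall>\<^sub>F y in at_right p. K x1 y = F y"
    using eventually_at_right_real[OF x1(2)]
  proof eventually_elim
    case (elim y) then have "y \<in> I" using between[OF p x1(1)] by auto
    then show ?case using FK[OF x1(1)] elim by auto
  qed
  then show ?thesis using Lim_transform_eventually[OF lim] lpos by blast
qed

end



lemma minus_filterlim: "filterlim (\<lambda>a::real. p - a) (at_left p) (at_right 0)"
proof (rule tendsto_imp_filterlim_at_left)
  have "((\<lambda>a::real. p - a) \<longlongrightarrow> p - 0) (at_right 0)" by (intro tendsto_intros)
  then show "((\<lambda>a::real. p - a) \<longlongrightarrow> p) (at_right 0)" by simp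
  show "\<forall>\<^sub>F a in at_right 0. p - a < p" by (auto simp: eventually_at_filter)
qed

lemma plus_filterlim: "c > 0 \<Longrightarrow> filterlim (\<lambda>a::real. p + c * a) (at_right p) (at_right 0)"
  using lin_filterlim_right[of c p 0] by simp

lemma minusc_filterlim: "c > 0 \<Longrightarrow> filterlim (\<lambda>a::real. p - c * a) (at_left p) (at_right 0)"
proof (rule tendsto_imp_filterlim_at_left)
  have "((\<lambda>a::real. p - c * a) \<longlongrightarrow> p - c * 0) (at_right 0)" by (intro tendsto_intros)
  then show "((\<lambda>a::real. p - c * a) \<longlongrightarrow> p) (at_right 0)" by simp
  show "c > 0 \<Longrightarrow> \<forall>\<^sub>F a in at_right 0. p - c * a < p" by (auto simp: eventually_at_filter)
qed

context M begin

lemma path: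
  assumes x0: "x0 \<in> I" and y0: "y0 \<in> I" and c: "c > 0"
    and l1: "(F \<longlongrightarrow> l1) (at_left x0)" "l1 > 0"
    and l2: "(F \<longlongrightarrow> l2) (at_right y0)" "l2 > 0"
    and d: "d > 0" "\<And>a. 0 < a \<Longrightarrow> a < d \<Longrightarrow> x0 - a \<in> I \<and> y0 + c * a \<in> I"
  shows "((\<lambda>a. \<phi> (t*(x0-a) + (1-t)*(y0+c*a))) \<longlongrightarrow>
     (t*l1*phiL x0 + (1-t)*l2*phiR y0)/(t*l1 + (1-t)*l2)) (at_right 0)"
proof -
  have A: "((\<lambda>a. F (x0 - a)) \<longlongrightarrow> l1) (at_right 0)"
    using filterlim_compose[OF l1(1) minus_filterlim] .
  have B: "((\<lambda>a. \<phi> (x0 - a)) \<longlongrightarrow> phiL x0) (at_right 0)"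
    using filterlim_compose[OF phiL[OF x0] minus_filterlim] .
  have C: "((\<lambda>a. F (y0 + c*a)) \<longlongrightarrow> l2) (at_right 0)"
    using filterlim_compose[OF l2(1) plus_filterlim[OF c]] .
  have D: "((\<lambda>a. \<phi> (y0 + c*a)) \<longlongrightarrow> phiR y0) (at_right 0)"
    using filterlim_compose[OF phiR[OF y0] plus_filterlim[OF c]] .
  have nz: "t*l1 + (1-t)*l2 \<noteq> 0" using t l1(2) l2(2)
    by (metis add_pos_pos diff_gt_0_iff_gt less_numeral_extra(3) mult_pos_pos)
  have lim: "((\<lambda>a. (t * F (x0-a) * \<phi> (x0-a) + (1-t) * F (y0+c*a) * \<phi> (y0+c*a)) /
              (t * F (x0-a) + (1-t) * F (y0+c*a))) \<longlongrightarrow>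
     (t*l1*phiL x0 + (1-t)*l2*phiR y0)/(t*l1 + (1-t)*l2)) (at_right 0)"
    by (intro tendsto_intros A B C D nz)
  have "\<forall>\<^sub>F a in at_right 0. (t * F (x0-a) * \<phi> (x0-a) + (1-t) * F (y0+c*a) * \<phi> (y0+c*a)) /
              (t * F (x0-a) + (1-t) * F (y0+c*a)) = \<phi> (t*(x0-a) + (1-t)*(y0+c*a))"
    using eventually_at_right_real[OF d(1)]
  proof eventually_elim
    case (elim a)
    then have I2: "x0 - a \<in> I" "y0 + c*a \<in> I" using d(2) by auto
    have "t * F (x0-a) + (1-t) * F (y0+c*a) > 0"
      using pos[OF I2(1)] pos[OF I2(2)] t by (simp add: add_pos_pos)
    then show ?case using eq[OF I2] by (simp add: field_simps)
  qed
  then show ?thesis by (rule Lim_transform_eventually[OF lim])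
qed

lemma phi_cont: assumes m0: "m0 \<in> I" shows "isCont \<phi> m0"
proof -
  obtain e where e: "e > 0" "{m0 - e..m0 + e} \<subseteq> I" using ball_in m0 by blast
  have s: "1 - t > 0" using t by simp
  define x0 where "x0 = m0 - (1-t)*e"
  define y0 where "y0 = m0 + t*e"
  have te: "(1-t)*e \<le> 1*e" "t*e \<le> 1*e" using t e by (intro mult_right_mono; simp)+
  have nn: "(1-t)*e \<ge> 0" "t*e \<ge> 0" using t e by simp_all
  then have x0I: "x0 \<in> I" and y0I: "y0 \<in> I" using te unfolding x0_def y0_def
    by (auto intro!: subsetD[OF e(2)])
  obtain l1 where l1: "l1 > 0" "(F \<longlongrightarrow> l1) (at_left x0)" using FL[OF x0I] by blast
  obtain l2 where l2: "l2 > 0" "(F \<longlongrightarrow> l2) (at_right y0)" using FR[OF y0I] by blast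
  define V where "V = (t*l1*phiL x0 + (1-t)*l2*phiR y0)/(t*l1 + (1-t)*l2)"
  define d where "d = min (t*e) ((1-t)^2*e/(2*t))"
  have d0: "d > 0" unfolding d_def using t e s by auto
  have inI: "x0 - a \<in> I \<and> y0 + c * a \<in> I" if "0 < a" "a < d" "0 < c" "c \<le> 2*t/(1-t)" for a c
  proof -
    have a1: "a < t*e" "a < (1-t)^2*e/(2*t)" using that unfolding d_def by auto
    then have h1: "x0 - a \<ge> m0 - e" unfolding x0_def by (simp add: algebra_simps)
    have h2: "x0 - a \<le> m0 + e" using that(1) e(1) nn unfolding x0_def by linarith
    have "c * a \<le> (2*t/(1-t)) * ((1-t)^2*e/(2*t))"
      using that a1 by (intro mult_mono) auto
    moreover have "(2*t/(1-t)) * ((1-t)^2*e/(2*t)) = (1-t)*e" using t s by (simp add: field_simps power2_eq_square)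
    ultimately have "c * a \<le> (1-t)*e" by simp
    then have h3: "y0 + c * a \<le> m0 + e" unfolding y0_def by (simp add: algebra_simps)
    have "c * a \<ge> 0" using that by simp
    then have h4: "y0 + c * a \<ge> m0 - e" using e(1) nn unfolding y0_def by linarith
    show ?thesis using e(2) h1 h2 h3 h4 by auto
  qed
  have c1: "2*t/(1-t) > 0" "t/(2*(1-t)) > 0" using t s by auto
  have c2: "t/(2*(1-t)) \<le> 2*t/(1-t)" using t s by (simp add: field_simps)
  have P1: "((\<lambda>a. \<phi> (t*(x0-a) + (1-t)*(y0+(2*t/(1-t))*a))) \<longlongrightarrow> V) (at_right 0)"
    unfolding V_def by (rule path[OF x0I y0I c1(1) l1(2,1) l2(2,1) d0]) (intro inI; use c1 c2 in simp)
  have P2: "((\<lambda>a. \<phi> (t*(x0-a) + (1-t)*(y0+(t/(2*(1-t)))*a))) \<longlongrightarrow> V) (at_right 0)"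
    unfolding V_def by (rule path[OF x0I y0I c1(2) l1(2,1) l2(2,1) d0]) (intro inI; use c1 c2 in simp)
  have m0e: "t*x0 + (1-t)*y0 = m0" unfolding x0_def y0_def by (simp add: algebra_simps)
  have e1: "t*(x0-a) + (1-t)*(y0+(2*t/(1-t))*a) = m0 + t*a" for a
  proof -
    have "(1-t)*(y0+(2*t/(1-t))*a) = (1-t)*y0 + 2*t*a" using s by (simp add: field_simps)
    then show ?thesis using m0e by (simp add: algebra_simps)
  qed
  have e2: "t*(x0-a) + (1-t)*(y0+(t/(2*(1-t)))*a) = m0 - (t/2)*a" for a
  proof -
    have "(1-t)*(y0+(t/(2*(1-t)))*a) = (1-t)*y0 + (t/2)*a" using s by (simp add: field_simps)
    moreover have "t*(x0-a) = t*x0 - t*a" by (simp add: algebra_simps)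
    moreover have "t*a = 2 * ((t/2)*a)" by simp
    ultimately show ?thesis using m0e by linarith
  qed
  have R: "((\<lambda>a. \<phi> (m0 + t*a)) \<longlongrightarrow> phiR m0) (at_right 0)"
    using filterlim_compose[OF phiR[OF m0] plus_filterlim[OF t(1)]] .
  have L: "((\<lambda>a. \<phi> (m0 - (t/2)*a)) \<longlongrightarrow> phiL m0) (at_right 0)"
  proof -
    have "t/2 > 0" using t by simp
    from filterlim_compose[OF phiL[OF m0] minusc_filterlim[OF this]] show ?thesis .
  qed
  have "phiR m0 = V" using tendsto_unique[OF _ R] P1 unfolding e1 by simp
  moreover have "phiL m0 = V" using tendsto_unique[OF _ L] P2 unfolding e2 by simp
  ultimately have "phiL m0 = \<phi> m0" "phiR m0 = \<phi> m0"
    using phiL_le[OF m0] phiR_ge[OF m0] by auto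
  then have "(\<phi> \<longlongrightarrow> \<phi> m0) (at_left m0)" "(\<phi> \<longlongrightarrow> \<phi> m0) (at_right m0)"
    using phiL[OF m0] phiR[OF m0] by auto
  then show ?thesis unfolding isCont_def by (rule filterlim_split_at)
qed

end



lemma DERIV_comp_lin:
  fixes g :: "real \<Rightarrow> real"
  assumes "(g has_real_derivative D) (at (m + c*h))"
  shows "((\<lambda>h. g (m + c*h)) has_real_derivative D * c) (at h)"
proof -
  have "((\<lambda>h. m + c*h) has_real_derivative c) (at h)" by (auto intro!: derivative_eq_intros)
  then show ?thesis using DERIV_chain2[of g D "\<lambda>h. m + c*h" h c UNIV] assms by simp
qed

lemma prim_integral:
  fixes g Gp :: "real \<Rightarrow> real"
  assumes D: "\<And>z. z \<in> {a<..<b} \<Longrightarrow> (Gp has_real_derivative g z) (at z)"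
    and t: "0 < t" "t < 1" and r: "r \<ge> 0"
    and inab: "\<And>h. h \<in> {0..r} \<Longrightarrow> m + (t-1)*h \<in> {a<..<b} \<and> m + t*h \<in> {a<..<b}"
  shows "((\<lambda>h. t * g (m + (t-1)*h) + (1-t) * g (m + t*h)) has_integral
   (-(t/(1-t)) * Gp (m + (t-1)*r) + ((1-t)/t) * Gp (m + t*r) - (-(t/(1-t)) + (1-t)/t) * Gp m)) {0..r}"
proof -
  define P where "P h = -(t/(1-t)) * Gp (m + (t-1)*h) + ((1-t)/t) * Gp (m + t*h)" for h
  have "((\<lambda>h. t * g (m + (t-1)*h) + (1-t) * g (m + t*h)) has_integral (P r - P 0)) {0..r}"
  proof (rule fundamental_theorem_of_calculus[OF r])
    fix h assume h: "h \<in> {0..r}"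
    have d1: "((\<lambda>h. Gp (m + (t-1)*h)) has_real_derivative g (m + (t-1)*h) * (t-1)) (at h)"
      by (rule DERIV_comp_lin) (use D inab[OF h] in auto)
    have d2: "((\<lambda>h. Gp (m + t*h)) has_real_derivative g (m + t*h) * t) (at h)"
      by (rule DERIV_comp_lin) (use D inab[OF h] in auto)
    have "(P has_real_derivative (-(t/(1-t)) * (g (m + (t-1)*h) * (t-1)) + ((1-t)/t) * (g (m + t*h) * t))) (at h)"
      unfolding P_def by (intro DERIV_add DERIV_cmult d1 d2)
    moreover have "-(t/(1-t)) * (g (m + (t-1)*h) * (t-1)) + ((1-t)/t) * (g (m + t*h) * t)
       = t * g (m + (t-1)*h) + (1-t) * g (m + t*h)" using t by (simp add: field_simps)
    ultimately have "(P has_real_derivative t * g (m + (t-1)*h) + (1-t) * g (m + t*h)) (at h within {0..r})"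
      by (simp add: has_field_derivative_at_within)
    then show "(P has_vector_derivative t * g (m + (t-1)*h) + (1-t) * g (m + t*h)) (at h within {0..r})"
      by (simp add: has_real_derivative_iff_has_vector_derivative)
  qed
  moreover have "P r - P 0 = -(t/(1-t)) * Gp (m + (t-1)*r) + ((1-t)/t) * Gp (m + t*r) - (-(t/(1-t)) + (1-t)/t) * Gp m"
    unfolding P_def by (simp add: algebra_simps)
  ultimately show ?thesis by simp
qed

lemma Ck_shift:
  assumes "open T" "Ck S k g" "\<And>x. x \<in> T \<Longrightarrow> x + c \<in> S"
  shows "Ck T k (\<lambda>x. g (x + c))"
  using Ck_affine[OF assms(1,2), of 1 c] assms(3) by simp

context M begin

lemma F_step: assumes "Ck I k \<phi>" shows "Ck I k F"
proof (rule Ck_local[OF I(1)])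
  fix y0 assume y0: "y0 \<in> I"
  obtain e where e: "e > 0" "{y0 - e..y0 + e} \<subseteq> I" using ball_in y0 by blast
  define x1 where "x1 = y0 - e"
  have x1: "x1 \<in> I" "x1 < y0" using e unfolding x1_def by auto
  define V where "V = I \<inter> {x1<..}"
  have V: "open V" "y0 \<in> V" "V \<subseteq> I" unfolding V_def using I(1) x1 y0 by auto
  have s: "1 - t > 0" using t by simp
  have g: "Ck V k (\<lambda>y. \<phi> ((1-t)*y + t*x1))"
    by (rule Ck_affine[OF V(1) assms]) (use conv[OF x1(1)] V(3) in \<open>auto simp: add.commute\<close>)
  have N: "Ck V k (\<lambda>y. t * F x1 * (\<phi> ((1-t)*y + t*x1) - \<phi> x1))"
    by (intro Ck_cmult[OF V(1)] Ck_diff[OF V(1)] g Ck_const[OF V(1)])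
  have Dn: "Ck V k (\<lambda>y. (1-t) * (\<phi> y - \<phi> ((1-t)*y + t*x1)))"
    by (intro Ck_cmult[OF V(1)] Ck_diff[OF V(1)] g Ck_subset[OF assms V(3)])
  have nz: "(1-t) * (\<phi> y - \<phi> ((1-t)*y + t*x1)) \<noteq> 0" if y: "y \<in> V" for y
  proof -
    have yI: "y \<in> I" "x1 < y" using y V_def by auto
    have "t*x1 + (1-t)*y < y" using mid_lt[OF yI(2)] by simp
    then have "\<phi> (t*x1 + (1-t)*y) < \<phi> y" using lt conv[OF x1(1) yI(1)] yI(1) by blast
    then show ?thesis using s by (simp add: add.commute)
  qed
  have "Ck V k (\<lambda>y. t * F x1 * (\<phi> ((1-t)*y + t*x1) - \<phi> x1) / ((1-t) * (\<phi> y - \<phi> ((1-t)*y + t*x1))))"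
    by (rule Ck_divide[OF V(1) N Dn nz])
  moreover have "t * F x1 * (\<phi> ((1-t)*y + t*x1) - \<phi> x1) / ((1-t) * (\<phi> y - \<phi> ((1-t)*y + t*x1))) = F y"
    if y: "y \<in> V" for y
  proof -
    have yI: "y \<in> I" "x1 < y" using y V_def by auto
    show ?thesis using FK[OF x1(1) yI(1)] yI(2) unfolding K_def by (simp add: add.commute)
  qed
  ultimately have "Ck V k F" using Ck_cong[OF V(1)] by blast
  then show "\<exists>V. open V \<and> y0 \<in> V \<and> V \<subseteq> I \<and> Ck V k F" using V by blast
qed

end



context M begin

lemma phi_step: assumes kF: "Ck I k F" and kp: "Ck I k \<phi>" shows "Ck I (Suc k) \<phi>"
proof (rule Ck_local[OF I(1)])
  fix m0 assume m0: "m0 \<in> I"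
  obtain e where e: "e > 0" "{m0 - e..m0 + e} \<subseteq> I" using ball_in m0 by blast
  define a where "a = m0 - e"
  define b where "b = m0 + e"
  define r where "r = e/2"
  define V where "V = {m0 - r<..<m0 + r}"
  have ab: "a < b" "{a..b} \<subseteq> I" using e unfolding a_def b_def by auto
  have V: "open V" "m0 \<in> V" "V \<subseteq> I" unfolding V_def r_def using e by (auto simp: a_def)
  have r0: "r \<ge> 0" "r > 0" unfolding r_def using e by auto
  have s: "1 - t > 0" using t by simp
  define u where "u x = F x * \<phi> x" for x
  have ku: "Ck I k u" unfolding u_def by (rule Ck_mult[OF I(1) kF kp])
  have cF: "continuous_on {a..b} F" using Ck_le[OF kF, of 0] continuous_on_subset ab(2) by auto
  have cu: "continuous_on {a..b} u" using Ck_le[OF ku, of 0] continuous_on_subset ab(2) by auto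
  have oab: "{a<..<b} \<subseteq> I" using ab by auto
  define Fp where "Fp x = integral {a..x} F" for x
  define Up where "Up x = integral {a..x} u" for x
  have Fp: "Ck {a<..<b} (Suc k) Fp" "\<And>z. z \<in> {a<..<b} \<Longrightarrow> (Fp has_real_derivative F z) (at z)"
    unfolding Fp_def using Ck_primitive[OF ab(1) cF Ck_subset[OF kF oab]] by auto
  have Up: "Ck {a<..<b} (Suc k) Up" "\<And>z. z \<in> {a<..<b} \<Longrightarrow> (Up has_real_derivative u z) (at z)"
    unfolding Up_def using Ck_primitive[OF ab(1) cu Ck_subset[OF ku oab]] by auto
  have inab: "m + (t-1)*h \<in> {a<..<b} \<and> m + t*h \<in> {a<..<b}" if m: "m \<in> V" and h: "h \<in> {0..r}" for m h
  proof -
    have h0: "0 \<le> h" "h \<le> r" using h by auto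
    have "(1-t)*h \<le> 1 * r" using h0 s t by (intro mult_mono) auto
    moreover have "(1-t)*h \<ge> 0" using h0 s by simp
    moreover have "t*h \<le> 1 * r" using h0 s t by (intro mult_mono) auto
    moreover have "t*h \<ge> 0" using h0 t by simp
    moreover have "m0 - r < m" "m < m0 + r" using m unfolding V_def by auto
    moreover have "(t-1)*h = - ((1-t)*h)" by (simp add: algebra_simps)
    ultimately show ?thesis unfolding a_def b_def r_def by auto
  qed
  define A where "A = -(t/(1-t))"
  define B where "B = (1-t)/t"
  define G where "G m = A * Fp (m + (t-1)*r) + B * Fp (m + t*r) - (A + B) * Fp m" for m
  define Hh where "Hh m = A * Up (m + (t-1)*r) + B * Up (m + t*r) - (A + B) * Up m" for m
  have key: "\<phi> m * G m = Hh m" "G m > 0" if m: "m \<in> V" for m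
  proof -
    have iG: "((\<lambda>h. t * F (m + (t-1)*h) + (1-t) * F (m + t*h)) has_integral G m) {0..r}"
      unfolding G_def A_def B_def by (rule prim_integral[OF Fp(2) t r0(1) inab[OF m]])
    have iH: "((\<lambda>h. t * u (m + (t-1)*h) + (1-t) * u (m + t*h)) has_integral Hh m) {0..r}"
      unfolding Hh_def A_def B_def by (rule prim_integral[OF Up(2) t r0(1) inab[OF m]])
    have I1: "((\<lambda>h. \<phi> m * (t * F (m + (t-1)*h) + (1-t) * F (m + t*h))) has_integral \<phi> m * G m) {0..r}"
      by (rule has_integral_mult_right[OF iG])
    have E1: "\<phi> m * (t * F (m + (t-1)*h) + (1-t) * F (m + t*h)) = t * u (m + (t-1)*h) + (1-t) * u (m + t*h)"
      if h: "h \<in> {0..r}" for h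
    proof -
      have xy: "m + (t-1)*h \<in> I" "m + t*h \<in> I" using inab[OF m h] oab by auto
      have "t * (m + (t-1)*h) + (1-t) * (m + t*h) = m" by (simp add: algebra_simps)
      then show ?thesis using eq[OF xy] unfolding u_def by (simp add: algebra_simps)
    qed
    have I2: "((\<lambda>h. t * u (m + (t-1)*h) + (1-t) * u (m + t*h)) has_integral \<phi> m * G m) {0..r}"
      by (rule has_integral_eq[OF E1 I1])
    show "\<phi> m * G m = Hh m" by (rule has_integral_unique[OF I2 iH])
    have mab: "m \<in> {a<..<b}" using inab[OF m, of 0] r0 by auto
    have incr: "Fp x < Fp y" if "x \<in> {a<..<b}" "y \<in> {a<..<b}" "x < y" for x y
    proof (rule DERIV_pos_imp_increasing[OF that(3)])
      fix z assume "x \<le> z" "z \<le> y"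
      then have "z \<in> {a<..<b}" using that by auto
      then show "\<exists>y. (Fp has_real_derivative y) (at z) \<and> 0 < y"
        by (intro exI[of _ "F z"] conjI Fp(2) pos) (use oab in auto)
    qed
    have "r \<in> {0..r}" using r0 by auto
    note rr = inab[OF m this]
    have "(t-1)*r < 0" "t*r > 0" using t r0 by (auto simp: mult_neg_pos)
    then have "m + (t-1)*r < m" "m < m + t*r" by simp_all
    then have f1: "Fp (m + (t-1)*r) < Fp m" and f2: "Fp m < Fp (m + t*r)"
      using incr[of "m + (t-1)*r" m] incr[of m "m + t*r"] rr mab by simp_all
    have AB: "A < 0" "B > 0" unfolding A_def B_def using t s by auto
    have "A * (Fp (m + (t-1)*r) - Fp m) > 0" using AB(1) f1 by (simp add: mult_neg_neg)
    moreover have "B * (Fp (m + t*r) - Fp m) > 0" using AB(2) f2 by simp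
    moreover have "G m = A * (Fp (m + (t-1)*r) - Fp m) + B * (Fp (m + t*r) - Fp m)"
      unfolding G_def by (simp add: algebra_simps)
    ultimately show "G m > 0" by simp
  qed
  have sh: "x + c \<in> {a<..<b}" if "x \<in> V" "c \<in> {(t-1)*r, t*r}" for x c
    using inab[OF that(1), of r] r0 that(2) by auto
  have sh0: "x + 0 \<in> {a<..<b}" if "x \<in> V" for x
    using inab[OF that(1), of 0] r0 by auto
  have Vab: "V \<subseteq> {a<..<b}" using sh0 by auto
  have c1: "Ck V (Suc k) (\<lambda>m. Fp (m + (t-1)*r))" "Ck V (Suc k) (\<lambda>m. Fp (m + t*r))"
    "Ck V (Suc k) (\<lambda>m. Up (m + (t-1)*r))" "Ck V (Suc k) (\<lambda>m. Up (m + t*r))"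
    by (rule Ck_shift[OF V(1) Fp(1)] Ck_shift[OF V(1) Up(1)]; use sh in simp)+
  have c3: "Ck V (Suc k) Fp" "Ck V (Suc k) Up" using Ck_subset[OF Fp(1) Vab] Ck_subset[OF Up(1) Vab] by auto
  have CG: "Ck V (Suc k) G"
    unfolding G_def by (rule Ck_diff[OF V(1) Ck_add[OF V(1) Ck_cmult[OF V(1) c1(1)] Ck_cmult[OF V(1) c1(2)]] Ck_cmult[OF V(1) c3(1)]])
  have CH: "Ck V (Suc k) Hh"
    unfolding Hh_def by (rule Ck_diff[OF V(1) Ck_add[OF V(1) Ck_cmult[OF V(1) c1(3)] Ck_cmult[OF V(1) c1(4)]] Ck_cmult[OF V(1) c3(2)]])
  have "Ck V (Suc k) (\<lambda>m. Hh m / G m)"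
  proof (rule Ck_divide[OF V(1) CH CG])
    fix x assume "x \<in> V" then show "G x \<noteq> 0" using key(2)[of x] by simp
  qed
  moreover have "Hh m / G m = \<phi> m" if "m \<in> V" for m
    using key[OF that] by (simp add: field_simps)
  ultimately have "Ck V (Suc k) \<phi>" using Ck_cong[OF V(1)] by blast
  then show "\<exists>V. open V \<and> m0 \<in> V \<and> V \<subseteq> I \<and> Ck V (Suc k) \<phi>" using V by blast
qed

lemma all_Ck: "Ck I k \<phi> \<and> Ck I k F"
proof (induction k)
  case 0
  have "continuous_on I \<phi>" using phi_cont by (simp add: continuous_at_imp_continuous_on)
  then show ?case using F_step[of 0] by simp
next
  case (Suc k)
  then have "Ck I (Suc k) \<phi>" using phi_step by blast
  then show ?case using F_step by blast
qed

end



lemma Ck2_D: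
  assumes "Ck S (Suc (Suc k)) g" "x \<in> S"
  shows "(g has_real_derivative deriv g x) (at x)" "(deriv g has_real_derivative deriv (deriv g) x) (at x)"
  using assms DERIV_deriv_iff_real_differentiable by auto

lemma deriv_eq_open:
  fixes L R :: "real \<Rightarrow> real"
  assumes "open S" "y \<in> S" "\<And>z. z \<in> S \<Longrightarrow> L z = R z"
    "(L has_real_derivative D1) (at y)" "(R has_real_derivative D2) (at y)"
  shows "D1 = D2"
proof -
  have "(R has_real_derivative D1) (at y)"
    by (rule has_field_derivative_transform_within_open[OF assms(4,1,2)]) (use assms(3) in auto)
  then show ?thesis using DERIV_unique assms(5) by blast
qed

context M begin

lemma ode: assumes x: "x \<in> I"
  shows "2 * deriv F x * deriv \<phi> x + F x * deriv (deriv \<phi>) x = 0"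
proof -
  have CF: "Ck I (Suc (Suc 0)) F" and Cp: "Ck I (Suc (Suc 0)) \<phi>" using all_Ck by blast+
  define p1 where "p1 = deriv \<phi>"
  define p2 where "p2 = deriv p1"
  define F1 where "F1 = deriv F"
  define F2 where "F2 = deriv F1"
  have dp: "(\<phi> has_real_derivative p1 y) (at y)" "(p1 has_real_derivative p2 y) (at y)"
    and dF: "(F has_real_derivative F1 y) (at y)" "(F1 has_real_derivative F2 y) (at y)"
    if "y \<in> I" for y
    using Ck2_D[OF Cp that] Ck2_D[OF CF that] unfolding p1_def p2_def F1_def F2_def by auto
  define s where "s = 1 - t"
  have mI: "t*x + s*y \<in> I" if "y \<in> I" for y using conv[OF x that] unfolding s_def .
  have dpm: "((\<lambda>y. \<phi> (t*x + s*y)) has_real_derivative p1 (t*x + s*y) * s) (at y)"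
    "((\<lambda>y. p1 (t*x + s*y)) has_real_derivative p2 (t*x + s*y) * s) (at y)" if "y \<in> I" for y
    using DERIV_comp_lin[OF dp(1)[OF mI[OF that]]] DERIV_comp_lin[OF dp(2)[OF mI[OF that]]] by auto
  define L where "L y = t * F x * (\<phi> (t*x + s*y) - \<phi> x)" for y
  define R where "R y = s * (F y * (\<phi> y - \<phi> (t*x + s*y)))" for y
  define L1 where "L1 y = t * F x * (p1 (t*x + s*y) * s)" for y
  define R1 where "R1 y = s * (F y * (p1 y - p1 (t*x + s*y) * s) + F1 y * (\<phi> y - \<phi> (t*x + s*y)))" for y
  have LR: "L y = R y" if "y \<in> I" for y
    using eq2[OF x that] unfolding L_def R_def s_def by (simp add: mult_ac)
  have dL: "(L has_real_derivative L1 y) (at y)" if "y \<in> I" for y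
  proof -
    have "((\<lambda>y. \<phi> (t*x + s*y) - \<phi> x) has_real_derivative p1 (t*x + s*y) * s - 0) (at y)"
      by (intro DERIV_diff dpm(1)[OF that] DERIV_const)
    from DERIV_cmult[OF this, of "t * F x"] show ?thesis unfolding L_def L1_def by simp
  qed
  have dR: "(R has_real_derivative R1 y) (at y)" if "y \<in> I" for y
  proof -
    have "((\<lambda>y. \<phi> y - \<phi> (t*x + s*y)) has_real_derivative p1 y - p1 (t*x + s*y) * s) (at y)"
      by (intro DERIV_diff dpm(1)[OF that] dp(1)[OF that])
    from DERIV_cmult[OF DERIV_mult'[OF dF(1)[OF that] this], of s] show ?thesis unfolding R_def R1_def .
  qed
  have LR1: "L1 y = R1 y" if "y \<in> I" for y
    by (rule deriv_eq_open[OF I(1) that LR dL[OF that] dR[OF that]])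
  define L2 where "L2 = t * F x * (p2 (t*x + s*x) * s * s)"
  define R2 where "R2 = s * ((F x * (p2 x - p2 (t*x + s*x) * s * s) + F1 x * (p1 x - p1 (t*x + s*x) * s))
     + (F1 x * (p1 x - p1 (t*x + s*x) * s) + F2 x * (\<phi> x - \<phi> (t*x + s*x))))"
  have dL1: "(L1 has_real_derivative L2) (at x)"
  proof -
    have "((\<lambda>y. p1 (t*x + s*y) * s) has_real_derivative p2 (t*x + s*x) * s * s) (at x)"
      using DERIV_cmult[OF dpm(2)[OF x], of s] by (simp add: mult_ac)
    from DERIV_cmult[OF this, of "t * F x"] show ?thesis unfolding L1_def L2_def by simp
  qed
  have dR1: "(R1 has_real_derivative R2) (at x)"
  proof -
    have a: "((\<lambda>y. p1 y - p1 (t*x + s*y) * s) has_real_derivative p2 x - p2 (t*x + s*x) * s * s) (at x)"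
      using DERIV_diff[OF dp(2)[OF x] DERIV_cmult[OF dpm(2)[OF x], of s]] by (simp add: mult_ac)
    have b: "((\<lambda>y. \<phi> y - \<phi> (t*x + s*y)) has_real_derivative p1 x - p1 (t*x + s*x) * s) (at x)"
      by (intro DERIV_diff dpm(1)[OF x] dp(1)[OF x])
    have "((\<lambda>y. F y * (p1 y - p1 (t*x + s*y) * s) + F1 y * (\<phi> y - \<phi> (t*x + s*y))) has_real_derivative
       (F x * (p2 x - p2 (t*x + s*x) * s * s) + F1 x * (p1 x - p1 (t*x + s*x) * s))
     + (F1 x * (p1 x - p1 (t*x + s*x) * s) + F2 x * (\<phi> x - \<phi> (t*x + s*x)))) (at x)"
      by (intro DERIV_add DERIV_mult'[OF dF(1)[OF x] a] DERIV_mult'[OF dF(2)[OF x] b])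
    from DERIV_cmult[OF this, of s] show ?thesis unfolding R1_def R2_def .
  qed
  have "L2 = R2" by (rule deriv_eq_open[OF I(1) x LR1 dL1 dR1])
  moreover have "t*x + s*x = x" unfolding s_def by (simp add: algebra_simps)
  ultimately have "t * F x * (p2 x * s * s) = s * ((F x * (p2 x - p2 x * s * s) + F1 x * (p1 x - p1 x * s))
     + F1 x * (p1 x - p1 x * s))"
    unfolding L2_def R2_def by simp
  then have "s * t * (2 * F1 x * p1 x + F x * p2 x) = 0"
    unfolding s_def by (simp add: algebra_simps)
  moreover have "s * t \<noteq> 0" using t unfolding s_def by simp
  ultimately show ?thesis unfolding p1_def p2_def F1_def by simp
qed

end



context M begin

lemma main: "(\<forall>k. Ck I k F) \<and> (\<forall>k. Ck I k \<phi>) \<and> (\<exists>\<gamma>. \<gamma> \<noteq> 0 \<and> (\<forall>x\<in>I. (F x)^2 * deriv \<phi> x = \<gamma>))"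
proof -
  have CF: "Ck I (Suc (Suc 0)) F" and Cp: "Ck I (Suc (Suc 0)) \<phi>" using all_Ck by blast+
  have cvx: "convex I" using is_interval_convex[OF I(2)] .
  have "\<exists>c. \<forall>x\<in>I. F x * F x * deriv \<phi> x = c"
  proof (rule has_field_derivative_zero_constant[OF cvx])
    fix x assume x: "x \<in> I"
    note d1 = Ck2_D[OF CF x] and d2 = Ck2_D[OF Cp x]
    have "((\<lambda>x. F x * F x * deriv \<phi> x) has_real_derivative
       F x * F x * deriv (deriv \<phi>) x + (F x * deriv F x + deriv F x * F x) * deriv \<phi> x) (at x)"
      by (intro DERIV_mult' d1 d2)
    moreover have "F x * F x * deriv (deriv \<phi>) x + (F x * deriv F x + deriv F x * F x) * deriv \<phi> x
       = F x * (2 * deriv F x * deriv \<phi> x + F x * deriv (deriv \<phi>) x)" by (simp add: algebra_simps)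
    ultimately have "((\<lambda>x. F x * F x * deriv \<phi> x) has_real_derivative 0) (at x)"
      using ode[OF x] by simp
    then show "((\<lambda>x. F x * F x * deriv \<phi> x) has_real_derivative 0) (at x within I)"
      by (rule has_field_derivative_at_within)
  qed
  then obtain \<gamma> where g: "\<And>x. x \<in> I \<Longrightarrow> (F x)^2 * deriv \<phi> x = \<gamma>" by (auto simp: power2_eq_square)
  have "\<gamma> \<noteq> 0"
  proof
    assume "\<gamma> = 0"
    then have z: "deriv \<phi> x = 0" if "x \<in> I" for x using g[OF that] pos[OF that] by simp
    have "\<exists>c. \<forall>x\<in>I. \<phi> x = c"
    proof (rule has_field_derivative_zero_constant[OF cvx])
      fix x assume x: "x \<in> I"
      have "(\<phi> has_real_derivative 0) (at x)" using Ck2_D(1)[OF Cp x] z[OF x] by simp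
      then show "(\<phi> has_real_derivative 0) (at x within I)" by (rule has_field_derivative_at_within)
    qed
    then obtain c where c: "\<And>x. x \<in> I \<Longrightarrow> \<phi> x = c" by blast
    obtain p where p: "p \<in> I" using I(3) by blast
    obtain e where e: "e > 0" "{p - e..p + e} \<subseteq> I" using ball_in p by blast
    have "p + e \<in> I" using e by auto
    then have "\<phi> p < \<phi> (p + e)" using lt p e by simp
    then show False using c p \<open>p + e \<in> I\<close> by simp
  qed
  then show ?thesis using all_Ck g by blast
qed

end



lemma Ck_cmult_inv:
  assumes "open S" "Ck S k (\<lambda>x. c * g x)" "c * c = 1" shows "Ck S k g"
proof -
  have "Ck S k (\<lambda>x. c * (c * g x))" by (rule Ck_cmult[OF assms(1,2)])
  then show ?thesis using Ck_cong[OF assms(1)] assms(3) by (simp add: mult.assoc[symmetric])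
qed

theorem theorem2p1:
  fixes I :: "real set" and \<phi> f :: "real \<Rightarrow> real" and t :: real
  assumes "I \<noteq> {}" and "open I" and "is_interval I"
    and "strict_mono_on I \<phi> \<or> strict_antimono_on I \<phi>"
    and "0 < t" and "t < 1"
    and "\<And>x y. x \<in> I \<Longrightarrow> y \<in> I \<Longrightarrow>
      (t * f x + (1 - t) * f y) * \<phi> (t * x + (1 - t) * y)
        = t * f x * \<phi> x + (1 - t) * f y * \<phi> y"
  shows "(\<forall>x\<in>I. f x = 0) \<or>
    ((\<forall>x\<in>I. f x \<noteq> 0) \<and> C_infinity_on I f \<and> C_infinity_on I \<phi> \<and>
     (\<exists>\<gamma>::real. \<gamma> \<noteq> 0 \<and> (\<forall>x\<in>I. (f x)^2 * deriv \<phi> x = \<gamma>)))"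
proof -
  note E = assms(7)
  have conv: "t*x + (1-t)*y \<in> I" if "x \<in> I" "y \<in> I" for x y
    using is_interval_convex[OF assms(3)] assms(5,6) convexD[of I x y t "1-t"] that by auto
  have E2: "t * f x * (\<phi> (t*x + (1-t)*y) - \<phi> x) = (1-t) * f y * (\<phi> y - \<phi> (t*x + (1-t)*y))"
    if "x \<in> I" "y \<in> I" for x y
    using E[OF that] by (simp add: algebra_simps)
  have dir: "(\<forall>x\<in>I. \<forall>y\<in>I. x < y \<longrightarrow> \<phi> x < \<phi> y) \<or> (\<forall>x\<in>I. \<forall>y\<in>I. x < y \<longrightarrow> \<phi> y < \<phi> x)"
    using assms(4) unfolding monotone_on_def by blast
  have inj: "\<phi> x \<noteq> \<phi> y" if "x \<in> I" "y \<in> I" "x \<noteq> y" for x y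
  proof (cases "x < y")
    case True then show ?thesis using dir that by (metis less_irrefl)
  next
    case False then have "y < x" using that by simp
    then show ?thesis using dir that by (metis less_irrefl)
  qed
  have mneq: "t*x + (1-t)*y \<noteq> y" "t*x + (1-t)*y \<noteq> x" if "x \<noteq> y" for x y
  proof -
    have "t*x + (1-t)*y - y = t*(x-y)" "t*x + (1-t)*y - x = (1-t)*(y-x)" by (simp_all add: algebra_simps)
    then show "t*x + (1-t)*y \<noteq> y" "t*x + (1-t)*y \<noteq> x" using that assms(5,6) by auto
  qed
  show ?thesis
  proof (cases "\<exists>x0\<in>I. f x0 = 0")
    case True
    then obtain x0 where x0: "x0 \<in> I" "f x0 = 0" by blast
    have "f y = 0" if y: "y \<in> I" for y
    proof (rule ccontr)
      assume fy: "f y \<noteq> 0"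
      then have "y \<noteq> x0" using x0 by auto
      have "(1-t) * f y * (\<phi> y - \<phi> (t*x0 + (1-t)*y)) = 0" using E2[OF x0(1) y] x0(2) by simp
      then have "\<phi> y = \<phi> (t*x0 + (1-t)*y)" using fy assms(6) by simp
      then show False using inj[OF y conv[OF x0(1) y]] mneq(1)[of x0 y] \<open>y \<noteq> x0\<close> by auto
    qed
    then show ?thesis by blast
  next
    case False
    then have nz: "\<And>x. x \<in> I \<Longrightarrow> f x \<noteq> 0" by blast
    have same: "f x * f y > 0" if xy: "x \<in> I" "y \<in> I" for x y
    proof (cases "x = y")
      case True then show ?thesis using nz[OF xy(1)] by (auto simp: zero_less_mult_iff linorder_neq_iff)
    next
      case False
      define m where "m = t*x + (1-t)*y"
      have mI: "m \<in> I" unfolding m_def using conv[OF xy] .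
      define A where "A = \<phi> m - \<phi> x"
      define B where "B = \<phi> y - \<phi> m"
      have AB: "A * B > 0"
      proof -
        have "x < m \<and> m < y \<or> y < m \<and> m < x"
        proof (cases "x < y")
          case True
          have "m - x = (1-t)*(y-x)" "y - m = t*(y-x)" unfolding m_def by (simp_all add: algebra_simps)
          moreover have "(1-t)*(y-x) > 0" "t*(y-x) > 0" using True assms(5,6) by simp_all
          ultimately have "m - x > 0" "y - m > 0" by simp_all
          then show ?thesis by simp
        next
          case False then have "y < x" using \<open>x \<noteq> y\<close> by simp
          have "x - m = (1-t)*(x-y)" "m - y = t*(x-y)" unfolding m_def by (simp_all add: algebra_simps)
          moreover have "(1-t)*(x-y) > 0" "t*(x-y) > 0" using \<open>y < x\<close> assms(5,6) by simp_all
          ultimately have "x - m > 0" "m - y > 0" by simp_all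
          then show ?thesis by simp
        qed
        then show ?thesis
        proof
          assume h: "x < m \<and> m < y"
          show ?thesis using dir
          proof
            assume d: "\<forall>x\<in>I. \<forall>y\<in>I. x < y \<longrightarrow> \<phi> x < \<phi> y"
            then have "A > 0" "B > 0" using h xy mI unfolding A_def B_def by auto
            then show ?thesis by simp
          next
            assume d: "\<forall>x\<in>I. \<forall>y\<in>I. x < y \<longrightarrow> \<phi> y < \<phi> x"
            then have "A < 0" "B < 0" using h xy mI unfolding A_def B_def by auto
            then show ?thesis by (simp add: mult_neg_neg)
          qed
        next
          assume h: "y < m \<and> m < x"
          show ?thesis using dir
          proof
            assume d: "\<forall>x\<in>I. \<forall>y\<in>I. x < y \<longrightarrow> \<phi> x < \<phi> y"
            then have "A < 0" "B < 0" using h xy mI unfolding A_def B_def by auto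
            then show ?thesis by (simp add: mult_neg_neg)
          next
            assume d: "\<forall>x\<in>I. \<forall>y\<in>I. x < y \<longrightarrow> \<phi> y < \<phi> x"
            then have "A > 0" "B > 0" using h xy mI unfolding A_def B_def by auto
            then show ?thesis by simp
          qed
        qed
      qed
      have "t * f x * A = (1-t) * f y * B" using E2[OF xy] unfolding A_def B_def m_def .
      then have "t * f x * A * (f y * B) = (1-t) * f y * B * (f y * B)" by simp
      then have "t * (A * B) * (f x * f y) = (1-t) * (f y * B)^2" by (simp add: algebra_simps power2_eq_square)
      moreover have "B \<noteq> 0" using AB by auto
      then have "(1-t) * (f y * B)^2 > 0" using nz[OF xy(2)] assms(6) by simp
      ultimately have "(t * (A * B)) * (f x * f y) > 0" by simp
      moreover have "t * (A * B) > 0" using AB assms(5) by simp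
      ultimately show ?thesis using zero_less_mult_pos by blast
    qed
    obtain p where p: "p \<in> I" using assms(1) by blast
    define \<sigma> where "\<sigma> = (if f p > 0 then 1 else -1::real)"
    define \<tau> where "\<tau> = (if strict_mono_on I \<phi> then 1 else -1::real)"
    have ss: "\<sigma> * \<sigma> = 1" "\<tau> * \<tau> = 1" unfolding \<sigma>_def \<tau>_def by auto
    define F where "F x = \<sigma> * f x" for x
    define \<Phi> where "\<Phi> x = \<tau> * \<phi> x" for x
    have Fpos: "F x > 0" if "x \<in> I" for x
    proof -
      have "f x * f p > 0" using same[OF that p] .
      then show ?thesis unfolding F_def \<sigma>_def by (auto simp: zero_less_mult_iff)
    qed
    have Pmono: "strict_mono_on I \<Phi>"
      using assms(4) unfolding \<Phi>_def \<tau>_def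
      by (auto simp: strict_mono_on_def monotone_on_def)
    have Eq: "(t * F x + (1 - t) * F y) * \<Phi> (t * x + (1 - t) * y) = t * F x * \<Phi> x + (1 - t) * F y * \<Phi> y"
      if "x \<in> I" "y \<in> I" for x y
    proof -
      have "\<sigma> * \<tau> * ((t * f x + (1 - t) * f y) * \<phi> (t * x + (1 - t) * y))
          = \<sigma> * \<tau> * (t * f x * \<phi> x + (1 - t) * f y * \<phi> y)" using E[OF that] by simp
      then show ?thesis unfolding F_def \<Phi>_def by (simp add: algebra_simps)
    qed
    interpret M I \<Phi> F t
      by unfold_locales (use assms(1,2,3,5,6) Pmono Fpos Eq in auto)
    from main obtain \<gamma> where CF: "\<And>k. Ck I k F" and CP: "\<And>k. Ck I k \<Phi>"
      and g: "\<gamma> \<noteq> 0" "\<And>x. x \<in> I \<Longrightarrow> (F x)^2 * deriv \<Phi> x = \<gamma>" by blast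
    have Feq: "F = (\<lambda>x. \<sigma> * f x)" by (rule ext) (simp add: F_def)
    have Peq: "\<Phi> = (\<lambda>x. \<tau> * \<phi> x)" by (rule ext) (simp add: \<Phi>_def)
    have Cf: "Ck I k f" for k
      by (rule Ck_cmult_inv[OF assms(2) CF[of k, unfolded Feq] ss(1)])
    have Cp: "Ck I k \<phi>" for k
      by (rule Ck_cmult_inv[OF assms(2) CP[of k, unfolded Peq] ss(2)])
    have "(f x)^2 * deriv \<phi> x = \<tau> * \<gamma>" if x: "x \<in> I" for x
    proof -
      have "Ck I (Suc (Suc 0)) \<phi>" using Cp by blast
      from Ck2_D(1)[OF this x] have d: "(\<phi> has_real_derivative deriv \<phi> x) (at x)" .
      have "deriv \<Phi> x = \<tau> * deriv \<phi> x"
        unfolding \<Phi>_def by (rule DERIV_imp_deriv[OF DERIV_cmult[OF d]])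
      moreover have "(F x)^2 = (f x)^2" unfolding F_def using ss(1)
        by (simp add: power2_eq_square algebra_simps)
      ultimately have h: "(f x)^2 * (\<tau> * deriv \<phi> x) = \<gamma>" using g(2)[OF x] by simp
      have "\<tau> * \<gamma> = (\<tau> * \<tau>) * ((f x)^2 * deriv \<phi> x)" unfolding h[symmetric] by (simp add: mult_ac)
      then show ?thesis using ss(2) by simp
    qed
    moreover have "\<tau> * \<gamma> \<noteq> 0" using g(1) unfolding \<tau>_def by simp
    ultimately show ?thesis using nz Ck_C_infinity Cf Cp by blast
  qed
qed



end
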